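(* Let $u\geqslant1$ and $b\geqslant 8u+24$ be integers. There exists a set $\mathfrak{A}$ of $u$ integer $3\times3$ matrices such that the multiset of absolute values of all entries of all matrices in $\mathfrak{A}$ is exactly the set $$[9,2u+7]_2\cup[10,4u+6]_4\cup[2u+17,6u+15]_2\cup[6u+25,8u+23]_2\cup[b,b+u-1]\cup[b+u+8,b+2u+7]\cup[b+5u+16,b+6u+15]\cup[b+8u+32,b+9u+31]$$ (each element occurring once), and $\sigma_r(A)=\sigma_c(A)=(0,0,0)$ for every $A\in\mathfrak{A}$.
   Context: For integers $a\equiv b\pmod d$ with $d\geqslant1$, $[a,b]_d=\{a+id: 0\leqslant i\leqslant (b-a)/d\}$ if $a\leqslant b$ and $[a,b]_d=\varnothing$ if $a>b$; $[a,b]=[a,b]_1$. For a matrix $A$, $\sigma_r(A)$ is the sequence of its row sums and $\sigma_c(A)$ the sequence of its column sums. *)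

theory Defs
  imports "HOL-Analysis.Analysis" "HOL-Library.Multiset"
begin

definition ivl_step :: "int \<Rightarrow> int \<Rightarrow> int \<Rightarrow> int set" where
  "ivl_step a b d = (if a \<le> b then {a + i * d | i. 0 \<le> i \<and> i \<le> (b - a) div d} else {})"

definition ivl :: "int \<Rightarrow> int \<Rightarrow> int set" where
  "ivl a b = ivl_step a b 1"

definition abs_entries :: "int^3^3 \<Rightarrow> int multiset" where
  "abs_entries A = (\<Sum>i\<in>UNIV. \<Sum>j\<in>UNIV. {#\<bar>A $ i $ j\<bar>#})"

definition row_sums_zero :: "int^3^3 \<Rightarrow> bool" where
  "row_sums_zero A \<longleftrightarrow> (\<forall>i. (\<Sum>j\<in>UNIV. A $ i $ j) = 0)"

definition col_sums_zero :: "int^3^3 \<Rightarrow> bool" where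
  "col_sums_zero A \<longleftrightarrow> (\<forall>j. (\<Sum>i\<in>UNIV. A $ i $ j) = 0)"

end

theory Submission
  imports Defs
begin

lemma ivl_step_img:
  fixes a d n :: int
  assumes "d > 0" "n \<ge> 1"
  shows "ivl_step a (a + (n - 1) * d) d = (\<lambda>i. a + i * d) ` {0..<n}"
proof -
  have "(a + (n - 1) * d - a) div d = n - 1" using assms by simp
  moreover have "a \<le> a + (n - 1) * d" using assms by simp
  ultimately show ?thesis unfolding ivl_step_def by auto
qed

lemma sum_single_mset:
  assumes "finite A" "inj_on f A"
  shows "(\<Sum>x\<in>A. {#f x#}) = mset_set (f ` A)"
  using assms
proof (induction A rule: finite_induct)
  case empty then show ?case by simp
next
  case (insert x F)
  then have "f x \<notin> f ` F" by auto
  with insert show ?case by auto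
qed

lemma img_rev:
  fixes n :: int
  shows "g ` {0..<n} = (\<lambda>m. g (n - 1 - m)) ` {0..<n}"
proof -
  have "(\<lambda>m. n - 1 - m) ` {0..<n} = {0..<n}"
    by (auto intro!: image_eqI[where x="n - 1 - x" for x])
  then show ?thesis by (metis image_image)
qed

lemma ivl_step_img':
  fixes a d n e :: int
  assumes "d > 0" "n \<ge> 1" "e = a + (n - 1) * d"
  shows "ivl_step a e d = (\<lambda>i. a + i * d) ` {0..<n}"
  using ivl_step_img assms by blast

definition MM :: "int \<Rightarrow> int \<Rightarrow> int \<Rightarrow> int^3^3" where
  "MM n b m = (let B1 = b + m; B2 = b + 2*n + 7 - m; B3 = b + 6*n + 15 - m; B4 = b + 8*n + 32 + m in
     vector [vector [B1, -B2, B2 - B1], vector [-B3, B4, B3 - B4], vector [B3 - B1, B2 - B4, 10 + 4*m]])"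

lemma MM_zero: "row_sums_zero (MM n b m) \<and> col_sums_zero (MM n b m)"
  unfolding row_sums_zero_def col_sums_zero_def MM_def Let_def
  by (auto simp: sum_3 forall_3)

lemma MM_entries:
  assumes "0 \<le> m" "m < n" "b \<ge> 8 * n + 24"
  shows "abs_entries (MM n b m) = {#b + m#} + {#b + 2*n + 7 - m#} + {#2*n+7-2*m#}
     + {#b + 6*n + 15 - m#} + {#b + 8*n + 32 + m#} + {#2*n+17+2*m#}
     + {#6*n+15-2*m#} + {#6*n+25+2*m#} + {#10+4*m#}"
  using assms unfolding abs_entries_def MM_def Let_def
  apply (simp add: sum_3)
  apply (simp add: algebra_simps)
  done

lemma mset_set_Un2:
  "finite A \<Longrightarrow> finite B \<Longrightarrow> A \<inter> B = {} \<Longrightarrow> mset_set (A \<union> B) = mset_set A + mset_set B"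
  by (rule mset_set_Union)

theorem lemma2p2:
  fixes u :: nat and b :: int
  assumes "u \<ge> 1" and "b \<ge> 8 * int u + 24"
  shows "\<exists>\<AA> :: (int^3^3) set. finite \<AA> \<and> card \<AA> = u \<and>
    (\<Sum>A\<in>\<AA>. abs_entries A) =
      mset_set (ivl_step 9 (2 * int u + 7) 2 \<union> ivl_step 10 (4 * int u + 6) 4
        \<union> ivl_step (2 * int u + 17) (6 * int u + 15) 2 \<union> ivl_step (6 * int u + 25) (8 * int u + 23) 2
        \<union> ivl b (b + int u - 1) \<union> ivl (b + int u + 8) (b + 2 * int u + 7)
        \<union> ivl (b + 5 * int u + 16) (b + 6 * int u + 15) \<union> ivl (b + 8 * int u + 32) (b + 9 * int u + 31)) \<and>
    (\<forall>A\<in>\<AA>. row_sums_zero A \<and> col_sums_zero A)"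
proof -
  define n where "n = int u"
  have n1: "n \<ge> 1" and bn: "b \<ge> 8 * n + 24" using assms unfolding n_def by auto
  define I where "I = {0..<n}"
  have finI: "finite I" unfolding I_def by simp
  have cardI: "card I = u" unfolding I_def n_def by simp
  have inj: "inj_on (MM n b) I"
  proof (rule inj_onI)
    fix x y assume "MM n b x = MM n b y"
    then have "MM n b x $ 1 $ 1 = MM n b y $ 1 $ 1" by simp
    then show "x = y" unfolding MM_def Let_def by simp
  qed
  define f1 where "f1 = (\<lambda>m::int. b + m)"
  define f2 where "f2 = (\<lambda>m::int. b + 2*n + 7 - m)"
  define f3 where "f3 = (\<lambda>m::int. 2*n+7-2*m)"
  define f4 where "f4 = (\<lambda>m::int. b + 6*n + 15 - m)"
  define f5 where "f5 = (\<lambda>m::int. b + 8*n + 32 + m)"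
  define f6 where "f6 = (\<lambda>m::int. 2*n+17+2*m)"
  define f7 where "f7 = (\<lambda>m::int. 6*n+15-2*m)"
  define f8 where "f8 = (\<lambda>m::int. 6*n+25+2*m)"
  define f9 where "f9 = (\<lambda>m::int. 10+4*m)"
  have injs: "inj_on f1 I" "inj_on f2 I" "inj_on f3 I" "inj_on f4 I" "inj_on f5 I"
    "inj_on f6 I" "inj_on f7 I" "inj_on f8 I" "inj_on f9 I"
    unfolding f1_def f2_def f3_def f4_def f5_def f6_def f7_def f8_def f9_def
    by (auto intro!: inj_onI)
  have "(\<Sum>A\<in>MM n b ` I. abs_entries A) = (\<Sum>m\<in>I. abs_entries (MM n b m))"
    using inj by (simp add: sum.reindex)
  also have "\<dots> = (\<Sum>m\<in>I. {#f1 m#} + {#f2 m#} + {#f3 m#} + {#f4 m#} + {#f5 m#}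
      + {#f6 m#} + {#f7 m#} + {#f8 m#} + {#f9 m#})"
    unfolding f1_def f2_def f3_def f4_def f5_def f6_def f7_def f8_def f9_def
    by (rule sum.cong) (auto simp: I_def MM_entries bn)
  also have "\<dots> = mset_set (f1 ` I) + mset_set (f2 ` I) + mset_set (f3 ` I) + mset_set (f4 ` I)
      + mset_set (f5 ` I) + mset_set (f6 ` I) + mset_set (f7 ` I) + mset_set (f8 ` I) + mset_set (f9 ` I)"
    by (simp only: sum.distrib sum_single_mset[OF finI injs(1)] sum_single_mset[OF finI injs(2)]
      sum_single_mset[OF finI injs(3)] sum_single_mset[OF finI injs(4)] sum_single_mset[OF finI injs(5)]
      sum_single_mset[OF finI injs(6)] sum_single_mset[OF finI injs(7)] sum_single_mset[OF finI injs(8)]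
      sum_single_mset[OF finI injs(9)])
  finally have L: "(\<Sum>A\<in>MM n b ` I. abs_entries A) = \<dots>" .
  have R3: "ivl_step 9 (2 * n + 7) 2 = f3 ` I"
    unfolding I_def f3_def using n1
    by (subst ivl_step_img'[of 2 n], simp_all, subst img_rev, simp add: algebra_simps)
  have R9: "ivl_step 10 (4 * n + 6) 4 = f9 ` I"
    unfolding I_def f9_def using n1
    by (subst ivl_step_img'[of 4 n], simp_all add: algebra_simps)
  have R8: "ivl_step (6 * n + 25) (8 * n + 23) 2 = f8 ` I"
    unfolding I_def f8_def using n1
    by (subst ivl_step_img'[of 2 n], simp_all add: algebra_simps)
  have R1: "ivl b (b + n - 1) = f1 ` I"
    unfolding I_def f1_def ivl_def using n1
    by (subst ivl_step_img'[of 1 n], simp_all add: algebra_simps)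
  have R5: "ivl (b + 8 * n + 32) (b + 9 * n + 31) = f5 ` I"
    unfolding I_def f5_def ivl_def using n1
    by (subst ivl_step_img'[of 1 n], simp_all add: algebra_simps)
  have R2: "ivl (b + n + 8) (b + 2 * n + 7) = f2 ` I"
  proof -
    have "ivl (b + n + 8) (b + 2 * n + 7) = (\<lambda>i. (b + n + 8) + i * 1) ` {0..<n}"
      unfolding ivl_def using n1 by (intro ivl_step_img') auto
    also have "\<dots> = (\<lambda>m. (b + n + 8) + (n - 1 - m) * 1) ` {0..<n}" by (rule img_rev)
    also have "\<dots> = f2 ` I" unfolding f2_def I_def by (rule image_cong) auto
    finally show ?thesis .
  qed
  have R4: "ivl (b + 5 * n + 16) (b + 6 * n + 15) = f4 ` I"
  proof -
    have "ivl (b + 5 * n + 16) (b + 6 * n + 15) = (\<lambda>i. (b + 5 * n + 16) + i * 1) ` {0..<n}"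
      unfolding ivl_def using n1 by (intro ivl_step_img') auto
    also have "\<dots> = (\<lambda>m. (b + 5 * n + 16) + (n - 1 - m) * 1) ` {0..<n}" by (rule img_rev)
    also have "\<dots> = f4 ` I" unfolding f4_def I_def by (rule image_cong) auto
    finally show ?thesis .
  qed
  have R67: "ivl_step (2 * n + 17) (6 * n + 15) 2 = f6 ` I \<union> f7 ` I"
  proof -
    have "ivl_step (2 * n + 17) (6 * n + 15) 2 = (\<lambda>i. 2 * n + 17 + i * 2) ` {0..<2*n}"
      using n1 by (subst ivl_step_img'[of 2 "2*n"], simp_all add: algebra_simps)
    also have "{0..<2*n} = {0..<n} \<union> (\<lambda>m. 2*n - 1 - m) ` {0..<n}"
      using n1 by (auto intro!: image_eqI[where x="2*n - 1 - x" for x])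
    finally show ?thesis unfolding I_def f6_def f7_def image_Un image_image
      by (simp add: algebra_simps)
  qed
  have D3: "\<And>x. x \<in> f3 ` I \<Longrightarrow> odd x \<and> 9 \<le> x \<and> x \<le> 2*n+7"
    unfolding f3_def I_def by auto
  have D9: "\<And>x. x \<in> f9 ` I \<Longrightarrow> even x \<and> 10 \<le> x \<and> x \<le> 4*n+6"
    unfolding f9_def I_def by auto
  have D6: "\<And>x. x \<in> f6 ` I \<Longrightarrow> odd x \<and> 2*n+17 \<le> x \<and> x \<le> 4*n+15"
    unfolding f6_def I_def by auto
  have D7: "\<And>x. x \<in> f7 ` I \<Longrightarrow> odd x \<and> 4*n+17 \<le> x \<and> x \<le> 6*n+15"
    unfolding f7_def I_def by auto
  have D8: "\<And>x. x \<in> f8 ` I \<Longrightarrow> odd x \<and> 6*n+25 \<le> x \<and> x \<le> 8*n+23"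
    unfolding f8_def I_def by auto
  have D1: "\<And>x. x \<in> f1 ` I \<Longrightarrow> b \<le> x \<and> x \<le> b+n-1"
    unfolding f1_def I_def by auto
  have D2: "\<And>x. x \<in> f2 ` I \<Longrightarrow> b+n+8 \<le> x \<and> x \<le> b+2*n+7"
    unfolding f2_def I_def by auto
  have D4: "\<And>x. x \<in> f4 ` I \<Longrightarrow> b+5*n+16 \<le> x \<and> x \<le> b+6*n+15"
    unfolding f4_def I_def by auto
  have D5: "\<And>x. x \<in> f5 ` I \<Longrightarrow> b+8*n+32 \<le> x"
    unfolding f5_def I_def by auto
  have p39: "f3 ` I \<inter> f9 ` I = {}" using D3 D9 bn n1 by fastforce
  have p36: "f3 ` I \<inter> f6 ` I = {}" using D3 D6 bn n1 by fastforce
  have p37: "f3 ` I \<inter> f7 ` I = {}" using D3 D7 bn n1 by fastforce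
  have p38: "f3 ` I \<inter> f8 ` I = {}" using D3 D8 bn n1 by fastforce
  have p31: "f3 ` I \<inter> f1 ` I = {}" using D3 D1 bn n1 by fastforce
  have p32: "f3 ` I \<inter> f2 ` I = {}" using D3 D2 bn n1 by fastforce
  have p34: "f3 ` I \<inter> f4 ` I = {}" using D3 D4 bn n1 by fastforce
  have p35: "f3 ` I \<inter> f5 ` I = {}" using D3 D5 bn n1 by fastforce
  have p96: "f9 ` I \<inter> f6 ` I = {}" using D9 D6 bn n1 by fastforce
  have p97: "f9 ` I \<inter> f7 ` I = {}" using D9 D7 bn n1 by fastforce
  have p98: "f9 ` I \<inter> f8 ` I = {}" using D9 D8 bn n1 by fastforce
  have p91: "f9 ` I \<inter> f1 ` I = {}" using D9 D1 bn n1 by fastforce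
  have p92: "f9 ` I \<inter> f2 ` I = {}" using D9 D2 bn n1 by fastforce
  have p94: "f9 ` I \<inter> f4 ` I = {}" using D9 D4 bn n1 by fastforce
  have p95: "f9 ` I \<inter> f5 ` I = {}" using D9 D5 bn n1 by fastforce
  have p67: "f6 ` I \<inter> f7 ` I = {}" using D6 D7 bn n1 by fastforce
  have p68: "f6 ` I \<inter> f8 ` I = {}" using D6 D8 bn n1 by fastforce
  have p61: "f6 ` I \<inter> f1 ` I = {}" using D6 D1 bn n1 by fastforce
  have p62: "f6 ` I \<inter> f2 ` I = {}" using D6 D2 bn n1 by fastforce
  have p64: "f6 ` I \<inter> f4 ` I = {}" using D6 D4 bn n1 by fastforce
  have p65: "f6 ` I \<inter> f5 ` I = {}" using D6 D5 bn n1 by fastforce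
  have p78: "f7 ` I \<inter> f8 ` I = {}" using D7 D8 bn n1 by fastforce
  have p71: "f7 ` I \<inter> f1 ` I = {}" using D7 D1 bn n1 by fastforce
  have p72: "f7 ` I \<inter> f2 ` I = {}" using D7 D2 bn n1 by fastforce
  have p74: "f7 ` I \<inter> f4 ` I = {}" using D7 D4 bn n1 by fastforce
  have p75: "f7 ` I \<inter> f5 ` I = {}" using D7 D5 bn n1 by fastforce
  have p81: "f8 ` I \<inter> f1 ` I = {}" using D8 D1 bn n1 by fastforce
  have p82: "f8 ` I \<inter> f2 ` I = {}" using D8 D2 bn n1 by fastforce
  have p84: "f8 ` I \<inter> f4 ` I = {}" using D8 D4 bn n1 by fastforce
  have p85: "f8 ` I \<inter> f5 ` I = {}" using D8 D5 bn n1 by fastforce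
  have p12: "f1 ` I \<inter> f2 ` I = {}" using D1 D2 bn n1 by fastforce
  have p14: "f1 ` I \<inter> f4 ` I = {}" using D1 D4 bn n1 by fastforce
  have p15: "f1 ` I \<inter> f5 ` I = {}" using D1 D5 bn n1 by fastforce
  have p24: "f2 ` I \<inter> f4 ` I = {}" using D2 D4 bn n1 by fastforce
  have p25: "f2 ` I \<inter> f5 ` I = {}" using D2 D5 bn n1 by fastforce
  have p45: "f4 ` I \<inter> f5 ` I = {}" using D4 D5 bn n1 by fastforce
  note pws = p39 p36 p37 p38 p31 p32 p34 p35 p96 p97 p98 p91 p92 p94 p95 p67 p68 p61 p62 p64 p65 p78 p71 p72 p74 p75 p81 p82 p84 p85 p12 p14 p15 p24 p25 p45
  have d1: "f3 ` I \<inter> f9 ` I = {}" by (rule p39)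
  have d2: "(f3 ` I \<union> f9 ` I) \<inter> (f6 ` I \<union> f7 ` I) = {}"
    using pws by (simp add: Int_Un_distrib Int_Un_distrib2)
  have d2': "f6 ` I \<inter> f7 ` I = {}" by (rule p67)
  have d3: "(f3 ` I \<union> f9 ` I \<union> (f6 ` I \<union> f7 ` I)) \<inter> f8 ` I = {}"
    using pws by (simp add: Int_Un_distrib Int_Un_distrib2)
  have d4: "(f3 ` I \<union> f9 ` I \<union> (f6 ` I \<union> f7 ` I) \<union> f8 ` I) \<inter> f1 ` I = {}"
    using pws by (simp add: Int_Un_distrib Int_Un_distrib2)
  have d5: "(f3 ` I \<union> f9 ` I \<union> (f6 ` I \<union> f7 ` I) \<union> f8 ` I \<union> f1 ` I) \<inter> f2 ` I = {}"
    using pws by (simp add: Int_Un_distrib Int_Un_distrib2)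
  have d6: "(f3 ` I \<union> f9 ` I \<union> (f6 ` I \<union> f7 ` I) \<union> f8 ` I \<union> f1 ` I \<union> f2 ` I) \<inter> f4 ` I = {}"
    using pws by (simp add: Int_Un_distrib Int_Un_distrib2)
  have d7: "(f3 ` I \<union> f9 ` I \<union> (f6 ` I \<union> f7 ` I) \<union> f8 ` I \<union> f1 ` I \<union> f2 ` I \<union> f4 ` I) \<inter> f5 ` I = {}"
    using pws by (simp add: Int_Un_distrib Int_Un_distrib2)
  have M: "mset_set (f3 ` I \<union> f9 ` I \<union> (f6 ` I \<union> f7 ` I) \<union> f8 ` I \<union> f1 ` I \<union> f2 ` I \<union> f4 ` I \<union> f5 ` I)
    = mset_set (f1 ` I) + mset_set (f2 ` I) + mset_set (f3 ` I) + mset_set (f4 ` I)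
      + mset_set (f5 ` I) + mset_set (f6 ` I) + mset_set (f7 ` I) + mset_set (f8 ` I) + mset_set (f9 ` I)"
    using finI
    by (simp only: mset_set_Un2 d1 d2 d2' d3 d4 d5 d6 d7 finite_Un finite_imageI add_ac)
  show ?thesis
  proof (intro exI conjI ballI)
    show "finite (MM n b ` I)" using finI by simp
    show "card (MM n b ` I) = u" using inj cardI by (simp add: card_image)
    show "(\<Sum>A\<in>MM n b ` I. abs_entries A) = mset_set (ivl_step 9 (2 * int u + 7) 2 \<union> ivl_step 10 (4 * int u + 6) 4
        \<union> ivl_step (2 * int u + 17) (6 * int u + 15) 2 \<union> ivl_step (6 * int u + 25) (8 * int u + 23) 2
        \<union> ivl b (b + int u - 1) \<union> ivl (b + int u + 8) (b + 2 * int u + 7)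
        \<union> ivl (b + 5 * int u + 16) (b + 6 * int u + 15) \<union> ivl (b + 8 * int u + 32) (b + 9 * int u + 31))"
      unfolding n_def[symmetric] R1 R2 R3 R4 R5 R67 R8 R9 L M by (rule refl)
    fix A assume "A \<in> MM n b ` I"
    then show "row_sums_zero A" "col_sums_zero A" using MM_zero by auto
  qed
qed

end
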